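(* Let $\varepsilon\ge0$ and let $u\in H^2(-1,1)$ be even and positive on $[-1,1]$ with $u'(\pm1)=0$. Then $\mathscr H_\varepsilon(u)\ge4\pi\sqrt\varepsilon$ and $$\mathscr W(u)\le\frac12\Bigl(\mathscr H_\varepsilon(u)+\sqrt{\mathscr H_\varepsilon(u)^2-16\pi^2\varepsilon}\Bigr).$$
   Context: $\mathscr A(u)=2\pi\int_{-1}^1u\sqrt{1+u'^2}\,dx$, $\mathscr W(u)=\frac\pi2\int_{-1}^1(\frac{1}{u\sqrt{1+u'^2}}-\frac{u''}{(1+u'^2)^{3/2}})^2u\sqrt{1+u'^2}\,dx$, $\mathscr H_\varepsilon=\mathscr W+\varepsilon\mathscr A$. *)

theory Defs
  imports "HOL-Analysis.Analysis"
begin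

text \<open>Membership of u in H^2(-1,1), via its continuous representative:
  u and u' are absolutely continuous on [-1,1], u' is the (classical) derivative of u,
  and u'' (the weak second derivative) lies in L^2(-1,1) (hence also L^1).
  u' and u'' are the derivatives used in the functionals.\<close>
definition H2_rep :: "(real \<Rightarrow> real) \<Rightarrow> (real \<Rightarrow> real) \<Rightarrow> (real \<Rightarrow> real) \<Rightarrow> bool" where
  "H2_rep u u' u'' \<longleftrightarrow>
     u'' absolutely_integrable_on {-1..1} \<and>
     (\<lambda>x. (u'' x)\<^sup>2) integrable_on {-1..1} \<and>
     (\<forall>x\<in>{-1..1}. u x = u (-1) + integral {-1..x} u' \<and>
                    u' x = u' (-1) + integral {-1..x} u'')"

definition area :: "(real \<Rightarrow> real) \<Rightarrow> (real \<Rightarrow> real) \<Rightarrow> real" where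
  "area u u' = 2 * pi * integral {-1..1} (\<lambda>x. u x * sqrt (1 + (u' x)\<^sup>2))"

definition willmore :: "(real \<Rightarrow> real) \<Rightarrow> (real \<Rightarrow> real) \<Rightarrow> (real \<Rightarrow> real) \<Rightarrow> real" where
  "willmore u u' u'' = pi / 2 * integral {-1..1}
     (\<lambda>x. (1 / (u x * sqrt (1 + (u' x)\<^sup>2)) - u'' x / (sqrt (1 + (u' x)\<^sup>2)) ^ 3)\<^sup>2
           * u x * sqrt (1 + (u' x)\<^sup>2))"

definition helfrich :: "real \<Rightarrow> (real \<Rightarrow> real) \<Rightarrow> (real \<Rightarrow> real) \<Rightarrow> (real \<Rightarrow> real) \<Rightarrow> real" where
  "helfrich \<epsilon> u u' u'' = willmore u u' u'' + \<epsilon> * area u u'"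

end

theory Submission imports Defs begin

lemma cont_mult_ai:
  fixes g f :: "real \<Rightarrow> real"
  assumes "continuous_on {a..b} g" "f absolutely_integrable_on {a..b}"
  shows "(\<lambda>x. g x * f x) absolutely_integrable_on {a..b}"
proof (rule absolutely_integrable_bounded_measurable_product_real)
  show "g \<in> borel_measurable (lebesgue_on {a..b})"
    by (rule continuous_imp_measurable_on_sets_lebesgue[OF assms(1)]) auto
  show "{a..b} \<in> sets lebesgue" by simp
  show "bounded (g ` {a..b})" by (intro compact_imp_bounded compact_continuous_image assms) auto
qed (fact)

lemma int_sub:
  fixes h :: "real \<Rightarrow> real"
  assumes "h integrable_on {a..b}" "a \<le> x" "x \<le> y" "y \<le> b"
  shows "integral {x..y} h = integral {a..y} h - integral {a..x} h"
proof -
  have "h integrable_on {a..y}" using assms by (intro integrable_subinterval_real[OF assms(1)]) auto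
  from Henstock_Kurzweil_Integration.integral_combine[OF assms(2,3) this] show ?thesis by simp
qed

definition pt :: "real \<Rightarrow> real \<Rightarrow> nat \<Rightarrow> nat \<Rightarrow> real" where
  "pt a b n i = a + (b - a) * real i / real n"

lemma pt_facts:
  assumes "a \<le> b" "n > 0"
  shows "pt a b n 0 = a" "pt a b n n = b" "pt a b n i \<le> pt a b n (Suc i)"
    "i \<le> n \<Longrightarrow> a \<le> pt a b n i" "i \<le> n \<Longrightarrow> pt a b n i \<le> b"
    "pt a b n (Suc i) - pt a b n i = (b - a) / real n"
proof -
  show "pt a b n 0 = a" "pt a b n n = b" "pt a b n (Suc i) - pt a b n i = (b - a) / real n"
    using assms by (auto simp: pt_def field_simps)
  show "pt a b n i \<le> pt a b n (Suc i)" "i \<le> n \<Longrightarrow> a \<le> pt a b n i"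
    using assms by (auto simp: pt_def field_simps intro!: mult_right_mono)
  assume "i \<le> n"
  then have "real i / real n \<le> 1" using assms by (simp add: divide_le_eq)
  then have "(b - a) * (real i / real n) \<le> (b - a) * 1" using assms by (intro mult_left_mono) auto
  then show "pt a b n i \<le> b" by (simp add: pt_def)
qed

lemma part_sum:
  fixes h :: "real \<Rightarrow> real"
  assumes "h integrable_on {a..b}" "a \<le> b" "n > 0"
  shows "(\<Sum>i<n. integral {pt a b n i..pt a b n (Suc i)} h) = integral {a..b} h"
proof -
  have "(\<Sum>i<n. integral {pt a b n i..pt a b n (Suc i)} h)
      = (\<Sum>i<n. integral {a..pt a b n (Suc i)} h - integral {a..pt a b n i} h)"
    using assms pt_facts[OF assms(2,3)]
    by (intro sum.cong refl int_sub[OF assms(1)]) auto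
  also have "\<dots> = integral {a..pt a b n n} h - integral {a..pt a b n 0} h"
    by (rule sum_lessThan_telescope)
  finally show ?thesis using pt_facts[OF assms(2,3)] by simp
qed

lemma arctan_est:
  fixes a b :: real
  shows "\<bar>(b - a) / (1 + a\<^sup>2) - (arctan b - arctan a)\<bar> \<le> (b - a)\<^sup>2"
proof -
  have core: "\<bar>(b - a) / (1 + a\<^sup>2) - (arctan b - arctan a)\<bar> \<le> (b - a)\<^sup>2"
    if "\<bar>z - a\<bar> \<le> \<bar>b - a\<bar>" "arctan b - arctan a = (b - a) / (1 + z\<^sup>2)" for z
  proof -
    have pa: "1 + a\<^sup>2 > 0" "1 + z\<^sup>2 > 0" by (auto intro: add_pos_nonneg)
    have "\<bar>z + a\<bar> \<le> (1 + a\<^sup>2) * (1 + z\<^sup>2)"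
    proof -
      have sq: "t * t = \<bar>t\<bar> * \<bar>t\<bar>" for t :: real by (simp add: abs_mult_self_eq)
      have "0 \<le> (\<bar>t\<bar> - 1) * (\<bar>t\<bar> - 1)" for t :: real by simp
      then have h: "2 * \<bar>t\<bar> \<le> 1 + t\<^sup>2" for t :: real
        using sq[of t] by (simp add: power2_eq_square algebra_simps)
      have e: "(1 + a\<^sup>2) * (1 + z\<^sup>2) = 1 + a\<^sup>2 + z\<^sup>2 + a\<^sup>2 * z\<^sup>2" by (simp add: algebra_simps)
      have "0 \<le> a\<^sup>2 * z\<^sup>2" "0 \<le> a\<^sup>2" "0 \<le> z\<^sup>2" by auto
      then show ?thesis unfolding e using h[of a] h[of z] abs_triangle_ineq[of z a] by linarith
    qed
    have "1 / (1 + a\<^sup>2) - 1 / (1 + z\<^sup>2) = (z - a) * (z + a) / ((1 + a\<^sup>2) * (1 + z\<^sup>2))"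
      using pa by (simp add: field_simps power2_eq_square)
    then have "\<bar>1 / (1 + a\<^sup>2) - 1 / (1 + z\<^sup>2)\<bar> \<le> \<bar>z - a\<bar>"
      using pa \<open>\<bar>z + a\<bar> \<le> _\<close>
      by (simp add: abs_mult divide_le_eq mult_left_mono)
    then have "\<bar>b - a\<bar> * \<bar>1 / (1 + a\<^sup>2) - 1 / (1 + z\<^sup>2)\<bar> \<le> \<bar>b - a\<bar> * \<bar>b - a\<bar>"
      using that(1) by (intro mult_left_mono) auto
    moreover have "(b - a) / (1 + a\<^sup>2) - (arctan b - arctan a) = (b - a) * (1 / (1 + a\<^sup>2) - 1 / (1 + z\<^sup>2))"
      using that(2) by (simp add: field_simps)
    ultimately show ?thesis by (simp add: abs_mult power2_eq_square)
  qed
  consider "a < b" | "a = b" | "b < a" by linarith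
  then show ?thesis
  proof cases
    case 1
    then obtain z where z: "a < z" "z < b" "arctan b - arctan a = (b - a) * inverse (1 + z\<^sup>2)"
      using MVT2[of a b arctan "\<lambda>x. inverse (1 + x\<^sup>2)"] DERIV_arctan by blast
    show ?thesis by (rule core[of z]) (use z in \<open>auto simp: field_simps\<close>)
  next
    case 2 then show ?thesis by simp
  next
    case 3
    then obtain z where z: "b < z" "z < a" "arctan a - arctan b = (a - b) * inverse (1 + z\<^sup>2)"
      using MVT2[of b a arctan "\<lambda>x. inverse (1 + x\<^sup>2)"] DERIV_arctan by blast
    show ?thesis by (rule core[of z]) (use z in \<open>auto simp: field_simps minus_divide_left\<close>)
  qed
qed


lemma uc_get:
  fixes h :: "real \<Rightarrow> real"
  assumes "continuous_on {a..b} h" "e > 0"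
  shows "\<exists>d>0. \<forall>x\<in>{a..b}. \<forall>y\<in>{a..b}. \<bar>x - y\<bar> < d \<longrightarrow> \<bar>h x - h y\<bar> < e"
  using compact_uniformly_continuous[OF assms(1) compact_Icc] assms(2)
  unfolding uniformly_continuous_on_def dist_real_def by metis

lemma ai_int: "(f::real\<Rightarrow>real) absolutely_integrable_on S \<Longrightarrow> f integrable_on S"
  by (simp add: absolutely_integrable_on_def)

lemma ai_abs: "(f::real\<Rightarrow>real) absolutely_integrable_on S \<Longrightarrow> (\<lambda>x. \<bar>f x\<bar>) integrable_on S"
  by (simp add: absolutely_integrable_on_def)

lemma key:
  fixes u v f :: "real \<Rightarrow> real"
  assumes fa: "f absolutely_integrable_on {-1..1}"
    and vdef: "\<And>x. x \<in> {-1..1} \<Longrightarrow> v x = integral {-1..x} f"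
    and v1: "v 1 = 0"
    and udef: "\<And>x. x \<in> {-1..1} \<Longrightarrow> u x = u (-1) + integral {-1..x} v"
  shows "integral {-1..1} (\<lambda>x. u x / (1 + (v x)\<^sup>2) * f x) \<le> 0"
proof -
  define S where "S = {-1..1::real}"
  have fi: "f integrable_on S" using fa ai_int S_def by blast
  have fabs: "(\<lambda>x. \<bar>f x\<bar>) integrable_on S" using fa ai_abs S_def by blast
  have vc: "continuous_on S v"
    unfolding S_def by (rule continuous_on_eq[OF indefinite_integral_continuous_1[OF fi[unfolded S_def]]]) (simp add: vdef)
  have vi: "v integrable_on S" unfolding S_def by (rule integrable_continuous_interval[OF vc[unfolded S_def]])
  have uc: "continuous_on S u"
  proof -
    have "continuous_on {-1..1} (\<lambda>x. u (-1) + integral {-1..x} v)"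
      by (intro continuous_on_add continuous_on_const indefinite_integral_continuous_1 vi[unfolded S_def])
    then show ?thesis unfolding S_def
      by (rule continuous_on_eq) (simp add: udef[symmetric])
  qed
  define g where "g x = u x / (1 + (v x)\<^sup>2)" for x
  have pos: "1 + (v x)\<^sup>2 > 0" for x by (simp add: add_pos_nonneg)
  have gc: "continuous_on S g" unfolding g_def
    by (intro continuous_intros uc vc) (use pos in \<open>simp add: less_le\<close>)
  have ac: "continuous_on S (\<lambda>x. arctan (v x))" by (intro continuous_intros vc)
  have avc: "continuous_on S (\<lambda>x. arctan (v x) * v x)" by (intro continuous_intros vc)
  have vabs: "(\<lambda>x. \<bar>v x\<bar>) integrable_on S" unfolding S_def
    by (rule integrable_continuous_interval) (intro continuous_intros vc[unfolded S_def])
  have avi: "(\<lambda>x. arctan (v x) * v x) integrable_on S" unfolding S_def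
    by (rule integrable_continuous_interval[OF avc[unfolded S_def]])
  have gfi: "(\<lambda>x. g x * f x) integrable_on S" unfolding S_def
    by (rule ai_int, rule cont_mult_ai) (use gc fa S_def in auto)
  obtain M where M: "\<And>x. x \<in> S \<Longrightarrow> \<bar>u x\<bar> \<le> M"
  proof -
    have "bounded (u ` S)" unfolding S_def by (intro compact_imp_bounded compact_continuous_image uc[unfolded S_def]) auto
    then show ?thesis using that unfolding bounded_iff by auto
  qed
  have M0: "0 \<le> M" using M[of "-1"] S_def by auto
  define F where "F = integral S (\<lambda>x. \<bar>f x\<bar>)"
  define V where "V = integral S (\<lambda>x. \<bar>v x\<bar>)"
  define C where "C = (1 + M) * F + V"
  have F0: "0 \<le> F" unfolding F_def by (rule integral_nonneg[OF fabs]) auto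
  have V0: "0 \<le> V" unfolding V_def by (rule integral_nonneg[OF vabs]) auto
  have C0: "0 \<le> C" unfolding C_def using F0 V0 M0 by auto
  define I where "I = integral S (\<lambda>x. g x * f x)"
  define AV where "AV = integral S (\<lambda>x. arctan (v x) * v x)"
  have AV0: "0 \<le> AV" unfolding AV_def
    by (rule integral_nonneg[OF avi]) (auto simp: zero_le_mult_iff)
  have vm1: "v (-1) = 0" using vdef[of "-1"] by simp
  have sub: "\<And>(h::real\<Rightarrow>real) a b. h integrable_on S \<Longrightarrow> -1 \<le> a \<Longrightarrow> a \<le> b \<Longrightarrow> b \<le> 1 \<Longrightarrow> h integrable_on {a..b}"
    unfolding S_def by (erule integrable_subinterval_real) auto
  have main: "I \<le> - AV + e * C" if "e > 0" for e
  proof -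
    obtain d1 where d1: "d1 > 0" "\<forall>x\<in>S. \<forall>y\<in>S. \<bar>x - y\<bar> < d1 \<longrightarrow> \<bar>g x - g y\<bar> < e"
      using uc_get[OF gc[unfolded S_def] \<open>e > 0\<close>] S_def by auto
    obtain d2 where d2: "d2 > 0" "\<forall>x\<in>S. \<forall>y\<in>S. \<bar>x - y\<bar> < d2 \<longrightarrow> \<bar>v x - v y\<bar> < e"
      using uc_get[OF vc[unfolded S_def] \<open>e > 0\<close>] S_def by auto
    obtain d3 where d3: "d3 > 0" "\<forall>x\<in>S. \<forall>y\<in>S. \<bar>x - y\<bar> < d3 \<longrightarrow> \<bar>arctan (v x) - arctan (v y)\<bar> < e"
      using uc_get[OF ac[unfolded S_def] \<open>e > 0\<close>] S_def by auto
    define d where "d = min d1 (min d2 d3)"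
    have d0: "d > 0" using d1 d2 d3 by (simp add: d_def)
    obtain n :: nat where n: "2 / d < real n" using reals_Archimedean2 by blast
    have n0: "n > 0" using n d0 by (metis gr0I of_nat_0 divide_pos_pos zero_less_numeral not_less_iff_gr_or_eq)
    have nd: "2 / real n < d" using n d0 n0 by (simp add: divide_less_eq mult.commute)
    define p where "p = pt (-1) 1 n"
    have pf: "p 0 = -1" "p n = 1" "\<And>i. p i \<le> p (Suc i)" "\<And>i. i \<le> n \<Longrightarrow> -1 \<le> p i"
      "\<And>i. i \<le> n \<Longrightarrow> p i \<le> 1" "\<And>i. p (Suc i) - p i = 2 / real n"
      using pt_facts[of "-1" 1 n] n0 unfolding p_def by auto
    define A where "A x = arctan (v x)" for x
    have step: "integral {p i..p (Suc i)} (\<lambda>x. g x * f x)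
        \<le> (u (p (Suc i)) * A (p (Suc i)) - u (p i) * A (p i))
          - integral {p i..p (Suc i)} (\<lambda>x. arctan (v x) * v x)
          + e * (1 + M) * integral {p i..p (Suc i)} (\<lambda>x. \<bar>f x\<bar>)
          + e * integral {p i..p (Suc i)} (\<lambda>x. \<bar>v x\<bar>)" if "i < n" for i
    proof -
      define a where "a = p i"
      define b where "b = p (Suc i)"
      have ab: "-1 \<le> a" "a \<le> b" "b \<le> 1" "b - a < d"
        using pf(3)[of i] pf(4)[of i] pf(5)[of "Suc i"] pf(6)[of i] that nd unfolding a_def b_def by auto
      have aS: "a \<in> S" and bS: "b \<in> S" using ab S_def by auto
      have xin: "x \<in> S" "\<bar>x - a\<bar> < d" "\<bar>x - b\<bar> < d" if "x \<in> {a..b}" for x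
        using that ab S_def by auto
      have fi': "f integrable_on {a..b}" and fabs': "(\<lambda>x. \<bar>f x\<bar>) integrable_on {a..b}"
        and vi': "v integrable_on {a..b}" and vabs': "(\<lambda>x. \<bar>v x\<bar>) integrable_on {a..b}"
        and avi': "(\<lambda>x. arctan (v x) * v x) integrable_on {a..b}"
        and gfi': "(\<lambda>x. g x * f x) integrable_on {a..b}"
        using sub[OF fi ab(1-3)] sub[OF fabs ab(1-3)] sub[OF vi ab(1-3)] sub[OF vabs ab(1-3)]
          sub[OF avi ab(1-3)] sub[OF gfi ab(1-3)] by auto
      have dv: "v b - v a = integral {a..b} f"
        using int_sub[OF fi[unfolded S_def], of a b] ab vdef aS bS S_def by auto
      have du: "u b - u a = integral {a..b} v"
      proof -
        have "u a = u (-1) + integral {-1..a} v" "u b = u (-1) + integral {-1..b} v"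
          using udef[of a] udef[of b] aS bS S_def by simp_all
        then show ?thesis using int_sub[OF vi[unfolded S_def], of a b] ab by simp
      qed
      have "integral {a..b} (\<lambda>x. g x * f x) - g a * (v b - v a) = integral {a..b} (\<lambda>x. g x * f x - g a * f x)"
        using dv integral_diff[OF gfi', of "\<lambda>x. g a * f x"] fi' by (simp add: integrable_on_mult_right)
      also have "\<dots> \<le> integral {a..b} (\<lambda>x. e * \<bar>f x\<bar>)"
      proof -
        have "\<bar>g x * f x - g a * f x\<bar> \<le> e * \<bar>f x\<bar>" if "x \<in> {a..b}" for x
        proof -
          have "\<bar>g x - g a\<bar> \<le> e" using d1(2) xin[OF that] aS unfolding d_def by force
          then have "\<bar>g x - g a\<bar> * \<bar>f x\<bar> \<le> e * \<bar>f x\<bar>" by (rule mult_right_mono) auto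
          then show ?thesis by (simp add: abs_mult left_diff_distrib[symmetric])
        qed
        moreover have "(\<lambda>x. g x * f x - g a * f x) integrable_on {a..b}"
          using gfi' fi' by (intro integrable_diff integrable_on_mult_right)
        ultimately have "\<bar>integral {a..b} (\<lambda>x. g x * f x - g a * f x)\<bar> \<le> integral {a..b} (\<lambda>x. e * \<bar>f x\<bar>)"
          using integral_norm_bound_integral[of "\<lambda>x. g x * f x - g a * f x" "{a..b}" "\<lambda>x. e * \<bar>f x\<bar>"]
            integrable_on_mult_right[OF fabs', of e] by auto
        then show ?thesis by linarith
      qed
      finally have sa: "integral {a..b} (\<lambda>x. g x * f x) \<le> g a * (v b - v a) + e * integral {a..b} (\<lambda>x. \<bar>f x\<bar>)"
        by simp
      have dvF: "\<bar>v b - v a\<bar> \<le> integral {a..b} (\<lambda>x. \<bar>f x\<bar>)"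
        unfolding dv using integral_norm_bound_integral[OF fi' fabs'] by auto
      have dve: "\<bar>v b - v a\<bar> \<le> e" using d2(2) aS bS ab unfolding d_def by force
      have "g a * (v b - v a) - u a * (A b - A a) = u a * ((v b - v a) / (1 + (v a)\<^sup>2) - (arctan (v b) - arctan (v a)))"
        unfolding g_def A_def by (simp add: field_simps)
      also have "\<dots> \<le> \<bar>u a\<bar> * (v b - v a)\<^sup>2"
        using arctan_est[of "v b" "v a"] by (metis abs_ge_self abs_mult abs_ge_zero mult_left_mono order_trans)
      also have "\<dots> \<le> M * (\<bar>v b - v a\<bar> * \<bar>v b - v a\<bar>)"
        using M[OF aS] by (intro mult_mono) (auto simp: power2_eq_square abs_mult_self_eq)
      also have "\<dots> \<le> M * (e * integral {a..b} (\<lambda>x. \<bar>f x\<bar>))"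
        using dvF dve M0 by (intro mult_left_mono mult_mono) auto
      finally have sb: "g a * (v b - v a) \<le> u a * (A b - A a) + e * M * integral {a..b} (\<lambda>x. \<bar>f x\<bar>)"
        by (simp add: algebra_simps)
      have "integral {a..b} (\<lambda>x. arctan (v x) * v x) - A b * (u b - u a)
          = integral {a..b} (\<lambda>x. arctan (v x) * v x - A b * v x)"
        using du integral_diff[OF avi', of "\<lambda>x. A b * v x"] vi' by (simp add: integrable_on_mult_right)
      also have "\<dots> \<le> integral {a..b} (\<lambda>x. e * \<bar>v x\<bar>)"
      proof -
        have "\<bar>arctan (v x) * v x - A b * v x\<bar> \<le> e * \<bar>v x\<bar>" if "x \<in> {a..b}" for x
        proof -
          have "\<bar>arctan (v x) - A b\<bar> \<le> e" using d3(2) xin[OF that] bS unfolding d_def A_def by force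
          then have "\<bar>arctan (v x) - A b\<bar> * \<bar>v x\<bar> \<le> e * \<bar>v x\<bar>" by (rule mult_right_mono) auto
          then show ?thesis by (simp add: abs_mult left_diff_distrib[symmetric])
        qed
        moreover have "(\<lambda>x. arctan (v x) * v x - A b * v x) integrable_on {a..b}"
          using avi' vi' by (intro integrable_diff integrable_on_mult_right)
        ultimately have "\<bar>integral {a..b} (\<lambda>x. arctan (v x) * v x - A b * v x)\<bar> \<le> integral {a..b} (\<lambda>x. e * \<bar>v x\<bar>)"
          using integral_norm_bound_integral[of "\<lambda>x. arctan (v x) * v x - A b * v x" "{a..b}" "\<lambda>x. e * \<bar>v x\<bar>"]
            integrable_on_mult_right[OF vabs', of e] by auto
        then show ?thesis by linarith
      qed
      finally have sd: "- (A b * (u b - u a)) \<le> - integral {a..b} (\<lambda>x. arctan (v x) * v x) + e * integral {a..b} (\<lambda>x. \<bar>v x\<bar>)"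
        by simp
      have sc: "u a * (A b - A a) = (u b * A b - u a * A a) - A b * (u b - u a)"
        by (simp add: algebra_simps)
      show ?thesis unfolding a_def[symmetric] b_def[symmetric]
        using sa sb sc sd by (simp add: algebra_simps)
    qed
    have "I = (\<Sum>i<n. integral {p i..p (Suc i)} (\<lambda>x. g x * f x))"
      unfolding I_def p_def S_def using part_sum[OF gfi[unfolded S_def] _ n0] by simp
    also have "\<dots> \<le> (\<Sum>i<n. (u (p (Suc i)) * A (p (Suc i)) - u (p i) * A (p i))
          - integral {p i..p (Suc i)} (\<lambda>x. arctan (v x) * v x)
          + e * (1 + M) * integral {p i..p (Suc i)} (\<lambda>x. \<bar>f x\<bar>)
          + e * integral {p i..p (Suc i)} (\<lambda>x. \<bar>v x\<bar>))"
      by (rule sum_mono) (use step in auto)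
    also have "\<dots> = (\<Sum>i<n. u (p (Suc i)) * A (p (Suc i)) - u (p i) * A (p i))
          - (\<Sum>i<n. integral {p i..p (Suc i)} (\<lambda>x. arctan (v x) * v x))
          + e * (1 + M) * (\<Sum>i<n. integral {p i..p (Suc i)} (\<lambda>x. \<bar>f x\<bar>))
          + e * (\<Sum>i<n. integral {p i..p (Suc i)} (\<lambda>x. \<bar>v x\<bar>))"
      by (simp add: sum.distrib sum_subtractf sum_distrib_left)
    also have "\<dots> = (u (p n) * A (p n) - u (p 0) * A (p 0)) - AV + e * (1 + M) * F + e * V"
    proof -
      have tel: "(\<Sum>i<n. u (p (Suc i)) * A (p (Suc i)) - u (p i) * A (p i)) = u (p n) * A (p n) - u (p 0) * A (p 0)"
        using sum_lessThan_telescope[of "\<lambda>i. u (p i) * A (p i)" n] by simp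
      show ?thesis unfolding tel
        unfolding AV_def F_def V_def p_def S_def
        using part_sum[OF avi[unfolded S_def] _ n0] part_sum[OF fabs[unfolded S_def] _ n0]
          part_sum[OF vabs[unfolded S_def] _ n0]
        by simp
    qed
    also have "\<dots> = - AV + e * C"
      using pf(1,2) v1 vm1 by (simp add: A_def C_def algebra_simps)
    finally show ?thesis .
  qed
  have "I \<le> 0"
  proof (rule ccontr)
    assume "\<not> I \<le> 0"
    then have I0: "I > 0" by simp
    define e where "e = I / (C + 1)"
    have e0: "e > 0" using I0 C0 by (simp add: e_def)
    have "e * C < I" using I0 C0 by (simp add: e_def field_simps)
    then show False using main[OF e0] AV0 by linarith
  qed
  then show ?thesis unfolding I_def S_def g_def .
qed



lemma final_alg:
  fixes W A \<epsilon> :: real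
  assumes "W \<ge> 0" "A \<ge> 0" "\<epsilon> \<ge> 0" "W * A \<ge> 4 * pi\<^sup>2"
  shows "W + \<epsilon> * A \<ge> 4 * pi * sqrt \<epsilon> \<and>
         W \<le> (W + \<epsilon> * A + sqrt ((W + \<epsilon> * A)\<^sup>2 - 16 * pi\<^sup>2 * \<epsilon>)) / 2"
proof -
  have e4: "(W + \<epsilon> * A)\<^sup>2 - (W - \<epsilon> * A)\<^sup>2 = 4 * \<epsilon> * (W * A)"
    by (simp add: power2_eq_square algebra_simps)
  have "4 * \<epsilon> * (4 * pi\<^sup>2) \<le> 4 * \<epsilon> * (W * A)"
    using assms by (intro mult_left_mono) auto
  then have k: "16 * pi\<^sup>2 * \<epsilon> \<le> (W + \<epsilon> * A)\<^sup>2 - (W - \<epsilon> * A)\<^sup>2" unfolding e4 by simp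
  have "(W - \<epsilon> * A)\<^sup>2 \<le> (W + \<epsilon> * A)\<^sup>2 - 16 * pi\<^sup>2 * \<epsilon>" using k by linarith
  then have "sqrt ((W - \<epsilon> * A)\<^sup>2) \<le> sqrt ((W + \<epsilon> * A)\<^sup>2 - 16 * pi\<^sup>2 * \<epsilon>)"
    by (rule real_sqrt_le_mono)
  then have s2: "W - \<epsilon> * A \<le> sqrt ((W + \<epsilon> * A)\<^sup>2 - 16 * pi\<^sup>2 * \<epsilon>)" by simp
  have "(4 * pi * sqrt \<epsilon>)\<^sup>2 = 16 * pi\<^sup>2 * \<epsilon>"
    using assms(3) by (simp add: power2_eq_square)
  also have "\<dots> \<le> (W + \<epsilon> * A)\<^sup>2" using k by (smt (verit) zero_le_power2)
  finally have "4 * pi * sqrt \<epsilon> \<le> W + \<epsilon> * A"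
    by (rule power2_le_imp_le) (use assms in auto)
  with s2 show ?thesis by auto
qed

lemma lin4: "(X::real) \<le> Y \<Longrightarrow> Y = Z \<Longrightarrow> X = 2 * (2 - G) \<Longrightarrow> G \<le> 0 \<Longrightarrow> 4 \<le> Z"
  by argo

lemma lambda_lemma:
  fixes Q B :: real
  assumes "Q \<ge> 0" "B \<ge> 0" "\<And>l. l > 0 \<Longrightarrow> l * Q + B / l \<ge> 4"
  shows "Q * B \<ge> 4"
proof (cases "B = 0")
  case True
  have "1 / (Q + 1) * Q < 1" using assms(1) by (simp add: field_simps)
  moreover have "1 / (Q + 1) * Q + B / (1 / (Q + 1)) \<ge> 4" using assms(1) by (intro assms(3)) simp
  ultimately show ?thesis using True by simp
next
  case False
  then have "B > 0" using assms(2) by simp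
  then have "B / 2 * Q + B / (B / 2) \<ge> 4" by (intro assms(3)) simp
  then show ?thesis using \<open>B > 0\<close> by (simp add: field_simps)
qed

theorem corollary3p2:
  fixes \<epsilon> :: real and u u' u'' :: "real \<Rightarrow> real"
  assumes "\<epsilon> \<ge> 0"
    and "H2_rep u u' u''"
    and "\<forall>x\<in>{-1..1}. u (-x) = u x"
    and "\<forall>x\<in>{-1..1}. u x > 0"
    and "u' (-1) = 0" and "u' 1 = 0"
  shows "helfrich \<epsilon> u u' u'' \<ge> 4 * pi * sqrt \<epsilon>
         \<and> willmore u u' u'' \<le>
             (helfrich \<epsilon> u u' u'' + sqrt ((helfrich \<epsilon> u u' u'')\<^sup>2 - 16 * pi\<^sup>2 * \<epsilon>)) / 2"
proof -
  define S where "S = {-1..1::real}"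
  have H: "u'' absolutely_integrable_on {-1..1}" "(\<lambda>x. (u'' x)\<^sup>2) integrable_on {-1..1}"
    "\<forall>x\<in>{-1..1}. u x = u (-1) + integral {-1..x} u' \<and> u' x = u' (-1) + integral {-1..x} u''"
    using assms(2) unfolding H2_rep_def by blast+
  have fa: "u'' absolutely_integrable_on S" and f2: "(\<lambda>x. (u'' x)\<^sup>2) integrable_on S"
    using H(1,2) unfolding S_def by blast+
  have uu: "u x = u (-1) + integral {-1..x} u'" if "x \<in> S" for x
    using H(3) that unfolding S_def by blast
  have vv: "u' x = integral {-1..x} u''" if "x \<in> S" for x
  proof -
    have "u' x = u' (-1) + integral {-1..x} u''" using H(3) that unfolding S_def by blast
    then show ?thesis using assms(5) by simp
  qed
  have upos: "\<And>x. x \<in> S \<Longrightarrow> u x > 0" using assms(4) S_def by auto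
  have KEY: "integral S (\<lambda>x. u x / (1 + (u' x)\<^sup>2) * u'' x) \<le> 0"
    unfolding S_def by (rule key[OF fa[unfolded S_def] vv[unfolded S_def] assms(6) uu[unfolded S_def]])
  have fi: "u'' integrable_on S" using fa ai_int by blast
  have vc: "continuous_on S u'"
    unfolding S_def by (rule continuous_on_eq[OF indefinite_integral_continuous_1[OF fi[unfolded S_def]]]) (simp add: vv S_def)
  have vi: "u' integrable_on S" unfolding S_def by (rule integrable_continuous_interval[OF vc[unfolded S_def]])
  have uc: "continuous_on S u"
  proof -
    have "continuous_on {-1..1} (\<lambda>x. u (-1) + integral {-1..x} u')"
      by (intro continuous_on_add continuous_on_const indefinite_integral_continuous_1 vi[unfolded S_def])
    then show ?thesis unfolding S_def
      by (rule continuous_on_eq) (simp add: uu[symmetric] S_def)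
  qed
  define s where "s x = sqrt (1 + (u' x)\<^sup>2)" for x
  have s1: "s x \<ge> 1" for x unfolding s_def by simp
  have spos: "s x > 0" for x using s1[of x] by linarith
  have ss: "(s x)\<^sup>2 = 1 + (u' x)\<^sup>2" for x unfolding s_def by (simp add: add_nonneg_nonneg)
  have sc: "continuous_on S s" unfolding s_def by (intro continuous_intros vc)
  define w where "w x = u x * s x" for x
  have wc: "continuous_on S w" unfolding w_def by (intro continuous_intros uc sc)
  have wi: "w integrable_on S" unfolding S_def by (rule integrable_continuous_interval[OF wc[unfolded S_def]])
  have wpos: "x \<in> S \<Longrightarrow> w x > 0" for x using upos spos unfolding w_def by simp
  define kap where "kap x = 1 / (u x * s x) - u'' x / (s x)^3" for x
  define WI where "WI x = (kap x)\<^sup>2 * u x * s x" for x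
  define g where "g x = u x / (1 + (u' x)\<^sup>2)" for x
  have W_eq: "willmore u u' u'' = pi / 2 * integral S WI"
    unfolding willmore_def WI_def kap_def s_def S_def ..
  have A_eq: "area u u' = 2 * pi * integral S w"
    unfolding area_def w_def s_def S_def ..
  define c1 where "c1 x = (inverse (u x * s x))\<^sup>2 * u x * s x" for x
  define c2 where "c2 x = - 2 * inverse (u x * s x) * inverse ((s x)^3) * u x * s x" for x
  define c3 where "c3 x = (inverse ((s x)^3))\<^sup>2 * u x * s x" for x
  have WI_split: "WI x = c1 x + c2 x * u'' x + c3 x * (u'' x)\<^sup>2" for x
    unfolding WI_def kap_def c1_def c2_def c3_def
    by (simp add: divide_inverse power2_eq_square algebra_simps)
  have unz: "\<forall>x\<in>S. u x \<noteq> 0" using upos by force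
  have snz: "\<forall>x\<in>S. s x \<noteq> 0" using spos by (simp add: less_le)
  have c1c: "continuous_on S c1" unfolding c1_def
    by (intro continuous_intros uc sc) (use unz snz in auto)
  have c2c: "continuous_on S c2" unfolding c2_def
    by (intro continuous_intros uc sc) (use unz snz in auto)
  have c3c: "continuous_on S c3" unfolding c3_def
    by (intro continuous_intros uc sc) (use unz snz in auto)
  have f2a: "(\<lambda>x. (u'' x)\<^sup>2) absolutely_integrable_on S"
    by (rule nonnegative_absolutely_integrable_1[OF f2]) simp
  have WIi: "WI integrable_on S"
  proof -
    have "(\<lambda>x. c1 x + c2 x * u'' x + c3 x * (u'' x)\<^sup>2) integrable_on S"
      unfolding S_def
      by (intro integrable_add integrable_continuous_interval[OF c1c[unfolded S_def]]
          ai_int[OF cont_mult_ai[OF c2c[unfolded S_def] fa[unfolded S_def]]]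
          ai_int[OF cont_mult_ai[OF c3c[unfolded S_def] f2a[unfolded S_def]]])
    then show ?thesis unfolding WI_split[abs_def] .
  qed
  have gc: "continuous_on S g"
  proof -
    have pos: "1 + (u' x)\<^sup>2 > 0" for x by (simp add: add_pos_nonneg)
    show ?thesis unfolding g_def
      by (intro continuous_intros uc vc) (use pos in \<open>simp add: less_le\<close>)
  qed
  have gfi: "(\<lambda>x. g x * u'' x) integrable_on S"
    unfolding S_def by (rule ai_int[OF cont_mult_ai[OF gc[unfolded S_def] fa[unfolded S_def]]])
  have kw: "kap x * w x = 1 - g x * u'' x" if "x \<in> S" for x
  proof -
    have unx: "u x \<noteq> 0" and snx: "s x \<noteq> 0" using unz that spos[of x] by auto
    have "kap x * w x = 1 - u'' x * u x * s x / (s x)^3"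
      unfolding kap_def w_def using unx snx by (simp add: field_simps)
    also have "u'' x * u x * s x / (s x)^3 = u'' x * u x / (s x)\<^sup>2"
      using snx by (simp add: power3_eq_cube power2_eq_square)
    finally show ?thesis unfolding ss g_def by simp
  qed
  define Q where "Q = integral S WI"
  define B where "B = integral S w"
  have Q0: "Q \<ge> 0" unfolding Q_def
    by (rule integral_nonneg[OF WIi]) (use upos spos in \<open>auto simp: WI_def less_imp_le\<close>)
  have B0: "B \<ge> 0" unfolding B_def
    by (rule integral_nonneg[OF wi]) (use wpos in \<open>auto simp: less_imp_le\<close>)
  have int1: "integral S (\<lambda>x. 1 - g x * u'' x) = 2 - integral S (\<lambda>x. g x * u'' x)"
    unfolding S_def using integral_diff[OF integrable_const_ivl gfi[unfolded S_def]] by simp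
  have G: "integral S (\<lambda>x. g x * u'' x) \<le> 0" using KEY unfolding g_def .
  have lam: "l * Q + B / l \<ge> 4" if "l > 0" for l
  proof -
    have "integral S (\<lambda>x. 2 * (1 - g x * u'' x)) \<le> integral S (\<lambda>x. l * WI x + w x / l)"
    proof (rule integral_le)
      show "(\<lambda>x. 2 * (1 - g x * u'' x)) integrable_on S"
        unfolding S_def by (intro integrable_on_mult_right integrable_diff integrable_const_ivl gfi[unfolded S_def])
      show "(\<lambda>x. l * WI x + w x / l) integrable_on S"
        by (intro integrable_add integrable_on_mult_right WIi integrable_on_mult_left wi[unfolded divide_inverse]
            | simp add: divide_inverse)+
      fix x assume "x \<in> S"
      have e: "l * WI x + w x / l - 2 * (kap x * w x) = w x / l * (l * kap x - 1)\<^sup>2"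
        using that by (simp add: WI_def w_def field_simps power2_eq_square)
      have nn: "0 \<le> w x / l * (l * kap x - 1)\<^sup>2" using wpos[OF \<open>x \<in> S\<close>] that by simp
      have e2: "l * WI x + w x / l = w x / l * (l * kap x - 1)\<^sup>2 + 2 * (1 - g x * u'' x)"
        using e[unfolded diff_eq_eq] kw[OF \<open>x \<in> S\<close>] by simp
      show "2 * (1 - g x * u'' x) \<le> l * WI x + w x / l"
        unfolding e2 by (rule add_increasing[OF nn order_refl])
    qed
    moreover have "integral S (\<lambda>x. l * WI x + w x / l) = l * Q + B / l"
      unfolding Q_def B_def
      using integral_add[OF integrable_on_mult_right[OF WIi, of l] integrable_on_mult_left[OF wi, of "inverse l"]]
      by (simp add: divide_inverse)
    moreover have "integral S (\<lambda>x. 2 * (1 - g x * u'' x)) = 2 * (2 - integral S (\<lambda>x. g x * u'' x))"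
      by (simp only: integral_mult_right int1)
    ultimately show ?thesis using G lin4 by metis
  qed
  have QB: "Q * B \<ge> 4" by (rule lambda_lemma[OF Q0 B0 lam])
  have W0: "willmore u u' u'' \<ge> 0" using Q0 unfolding W_eq Q_def by simp
  have A0: "area u u' \<ge> 0" using B0 unfolding A_eq B_def by simp
  have "willmore u u' u'' * area u u' = pi\<^sup>2 * (Q * B)"
    unfolding W_eq A_eq Q_def B_def by (simp add: power2_eq_square)
  also have "\<dots> \<ge> pi\<^sup>2 * 4" using QB by (intro mult_left_mono) auto
  finally have WA: "willmore u u' u'' * area u u' \<ge> 4 * pi\<^sup>2" by simp
  show ?thesis
    using final_alg[OF W0 A0 assms(1) WA] unfolding helfrich_def .
qed

end
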